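(* Fix a distribution-labeled $k$-graph $G=(\mathcal V,\mathcal E,N,(\mu_{\mathsf e}))$, an integer $K>0$ and $\alpha\in(0,1]$. For any constant $p>\frac1{k-1}$ there is a constant $\delta\in(0,1)$ such that, if for each $(\mathsf e,j)\in\mathcal E\times[K]$ a matching $M^{(\mathsf e,j)}$ is sampled independently and uniformly from $\mathcal M_{\mathcal U_{\mathsf e},\alpha n}$, then with probability $1-o(1)$ as $n\to\infty$: $$\sum_{(\mathsf e,j)\in\mathcal E\times[K]}|M^{(\mathsf e,j)}[V]|\le p|V|\quad\text{for all }V\subseteq\mathcal V\times[n]\text{ with }|V|\le\delta n.$$
   Context: $k\ge2$. A distribution-labeled $k$-graph $G=(\mathcal V,\mathcal E,N,(\mu_{\mathsf e}))$ consists of a finite set $\mathcal V$, a finite multiset $\mathcal E$ of ordered $k$-tuples of distinct elements of $\mathcal V$, an integer $N\ge2$ and distributions $\mu_{\mathsf e}$ (irrelevant here). For $\mathsf e=(\mathsf v_1,\dots,\mathsf v_k)$, $\mathcal U_{\mathsf e}=(\{\mathsf v_1\}\times[n],\dots,\{\mathsf v_k\}\times[n])$, and $\mathcal M_{\mathcal U_{\mathsf e},m}$ is the set of $m$-element sets of pairwise vertex-disjoint tuples in $(\{\mathsf v_1\}\times[n])\times\dots\times(\{\mathsf v_k\}\times[n])$; $n$ ranges over integers with $\alpha n$ an integer. For a matching $M$ and $V\subseteq\mathcal V\times[n]$, $M[V]$ is the set of edges $(v_1,\dots,v_k)\in M$ with all $v_i\in V$. *)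

theory Defs
  imports "HOL-Probability.Probability"
begin

text \<open>A (hyper)edge e = (v_1,...,v_k) of the k-graph is a list of distinct vertices.
  The blow-up vertex set is V x [n], with [n] = {1..n}.
  Tuples in ({v_1} x [n]) x ... x ({v_k} x [n]) are lists of length k.\<close>

definition blowup_tuples :: "'v list \<Rightarrow> nat \<Rightarrow> ('v \<times> nat) list set" where
  "blowup_tuples e n =
     {t. length t = length e \<and> (\<forall>i<length e. fst (t ! i) = e ! i \<and> snd (t ! i) \<in> {1..n})}"

definition matchings :: "'v list \<Rightarrow> nat \<Rightarrow> nat \<Rightarrow> ('v \<times> nat) list set set" where
  "matchings e n m =
     {M. M \<subseteq> blowup_tuples e n \<and> card M = m \<and>
         (\<forall>t\<in>M. \<forall>s\<in>M. t \<noteq> s \<longrightarrow> set t \<inter> set s = {})}"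

definition induced_edges :: "('v \<times> nat) list set \<Rightarrow> ('v \<times> nat) set \<Rightarrow> ('v \<times> nat) list set" where
  "induced_edges M V = {t \<in> M. set t \<subseteq> V}"

text \<open>Independent uniform sampling of M^{(e,j)} for (e,j) in E x [K]; the multiset E
  is given as a list es, indexed by i < length es; [K] is indexed by j < K.\<close>
definition sample_matchings ::
  "'v list list \<Rightarrow> nat \<Rightarrow> nat \<Rightarrow> nat \<Rightarrow> (nat \<times> nat \<Rightarrow> ('v \<times> nat) list set) pmf" where
  "sample_matchings es K n m =
     Pi_pmf ({..<length es} \<times> {..<K}) {} (\<lambda>(i, j). pmf_of_set (matchings (es ! i) n m))"

end

theory Submission imports Defs "HOL-Real_Asymp.Real_Asymp" begin

definition sw :: "nat \<Rightarrow> nat \<Rightarrow> nat \<Rightarrow> nat" where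
  "sw a b x = (if x = a then b else if x = b then a else x)"

lemma sw_sw[simp]: "sw a b (sw a b x) = x" by (auto simp: sw_def)
lemma sw_inj: "sw a b x = sw a b y \<longleftrightarrow> x = y" by (auto simp: sw_def)
lemma sw_a[simp]: "sw a b a = b" by (auto simp: sw_def)
lemma sw_other: "x \<noteq> a \<Longrightarrow> x \<noteq> b \<Longrightarrow> sw a b x = x" by (auto simp: sw_def)
lemma sw_range: "a \<in> S \<Longrightarrow> b \<in> S \<Longrightarrow> x \<in> S \<Longrightarrow> sw a b x \<in> S" by (auto simp: sw_def)

definition psw :: "('v \<times> nat) list \<Rightarrow> ('v \<times> nat) list \<Rightarrow> ('v \<times> nat) list \<Rightarrow> ('v \<times> nat) list" where
  "psw t t' s = map (\<lambda>i. (fst (s!i), sw (snd (t!i)) (snd (t'!i)) (snd (s!i)))) [0..<length s]"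

lemma psw_length[simp]: "length (psw t t' s) = length s" by (simp add: psw_def)
lemma psw_nth: "i < length s \<Longrightarrow> psw t t' s ! i = (fst (s!i), sw (snd (t!i)) (snd (t'!i)) (snd (s!i)))"
  by (simp add: psw_def)

lemma blowup_disj:
  assumes "distinct e" "s \<in> blowup_tuples e n" "s' \<in> blowup_tuples e n"
  shows "(set s \<inter> set s' = {}) \<longleftrightarrow> (\<forall>i<length e. snd (s!i) \<noteq> snd (s'!i))"
proof
  assume d: "set s \<inter> set s' = {}"
  show "\<forall>i<length e. snd (s!i) \<noteq> snd (s'!i)"
  proof (intro allI impI notI)
    fix i assume i: "i < length e" and eq: "snd (s!i) = snd (s'!i)"
    have "s!i = s'!i" using assms i eq by (simp add: blowup_tuples_def prod_eq_iff)
    moreover have "s!i \<in> set s" "s'!i \<in> set s'" using assms i by (auto simp: blowup_tuples_def)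
    ultimately show False using d by auto
  qed
next
  assume h: "\<forall>i<length e. snd (s!i) \<noteq> snd (s'!i)"
  show "set s \<inter> set s' = {}"
  proof (rule ccontr)
    assume "set s \<inter> set s' \<noteq> {}"
    then obtain x where "x \<in> set s" "x \<in> set s'" by auto
    then obtain i j where ij: "i < length s" "j < length s'" "x = s!i" "x = s'!j"
      by (auto simp: in_set_conv_nth)
    have L: "length s = length e" "length s' = length e" using assms by (auto simp: blowup_tuples_def)
    have "fst (s!i) = e!i" "fst (s'!j) = e!j" using assms ij L by (auto simp: blowup_tuples_def)
    hence "e!i = e!j" using ij by simp
    hence "i = j" using assms(1) ij L by (simp add: nth_eq_iff_index_eq)
    thus False using h ij L by auto
  qed
qed

lemma psw_blowup:
  assumes "t \<in> blowup_tuples e n" "t' \<in> blowup_tuples e n" "s \<in> blowup_tuples e n"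
  shows "psw t t' s \<in> blowup_tuples e n"
  using assms by (auto simp: blowup_tuples_def psw_nth sw_def)

lemma psw_invol:
  assumes "t \<in> blowup_tuples e n" "t' \<in> blowup_tuples e n" "s \<in> blowup_tuples e n"
  shows "psw t t' (psw t t' s) = s"
  using assms by (intro nth_equalityI) (auto simp: blowup_tuples_def psw_nth prod_eq_iff)

lemma psw_t:
  assumes "t \<in> blowup_tuples e n" "t' \<in> blowup_tuples e n"
  shows "psw t t' t = t'"
  using assms by (intro nth_equalityI) (auto simp: blowup_tuples_def psw_nth prod_eq_iff)

lemma psw_fix:
  assumes "s \<in> blowup_tuples e n" "t \<in> blowup_tuples e n" "t' \<in> blowup_tuples e n"
    "\<forall>i<length e. snd (s!i) \<noteq> snd (t!i)" "\<forall>i<length e. snd (s!i) \<noteq> snd (t'!i)"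
  shows "psw t t' s = s"
  using assms by (intro nth_equalityI) (auto simp: blowup_tuples_def psw_nth sw_other prod_eq_iff)

lemma psw_inj:
  assumes "t \<in> blowup_tuples e n" "t' \<in> blowup_tuples e n"
  shows "inj_on (psw t t') (blowup_tuples e n)"
proof (rule inj_onI)
  fix x y assume x: "x \<in> blowup_tuples e n" and y: "y \<in> blowup_tuples e n" and eq: "psw t t' x = psw t t' y"
  have "x = psw t t' (psw t t' x)" using psw_invol[OF assms x] by simp
  also have "\<dots> = psw t t' (psw t t' y)" using eq by simp
  also have "\<dots> = y" using psw_invol[OF assms y] by simp
  finally show "x = y" .
qed

lemma psw_disj:
  assumes "distinct e" "t \<in> blowup_tuples e n" "t' \<in> blowup_tuples e n"
    "s \<in> blowup_tuples e n" "s' \<in> blowup_tuples e n" "set s \<inter> set s' = {}"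
  shows "set (psw t t' s) \<inter> set (psw t t' s') = {}"
proof -
  have L: "length s = length e" "length s' = length e" using assms by (auto simp: blowup_tuples_def)
  have "\<forall>i<length e. snd (s!i) \<noteq> snd (s'!i)" using blowup_disj[OF assms(1,4,5)] assms(6) by simp
  hence "\<forall>i<length e. snd (psw t t' s!i) \<noteq> snd (psw t t' s'!i)" using L by (simp add: psw_nth sw_inj)
  thus ?thesis using blowup_disj[OF assms(1) psw_blowup[OF assms(2,3,4)] psw_blowup[OF assms(2,3,5)]]
    by simp
qed


lemma finite_blowup: "finite (blowup_tuples e n)"
proof -
  have "blowup_tuples e n \<subseteq> {xs. set xs \<subseteq> set e \<times> {1..n} \<and> length xs = length e}"
    by (auto simp: blowup_tuples_def in_set_conv_nth prod_eq_iff) (metis prod.collapse)+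
  thus ?thesis by (rule finite_subset) (simp add: finite_lists_length_eq)
qed

lemma finite_matchings: "finite (matchings e n m)"
proof -
  have "matchings e n m \<subseteq> Pow (blowup_tuples e n)" by (auto simp: matchings_def)
  thus ?thesis using finite_blowup by (metis finite_Pow_iff finite_subset)
qed

lemma finite_matchings_filter[simp]: "finite {M \<in> matchings e n m. P M}"
  by (rule finite_subset[OF _ finite_matchings]) auto

lemma finite_blowup_filter[simp]: "finite {t \<in> blowup_tuples e n. P t}"
  by (rule finite_subset[OF _ finite_blowup]) auto

lemma matchingsD:
  assumes "M \<in> matchings e n m"
  shows "M \<subseteq> blowup_tuples e n" "card M = m" "finite M"
    "\<And>t s. t \<in> M \<Longrightarrow> s \<in> M \<Longrightarrow> t \<noteq> s \<Longrightarrow> set t \<inter> set s = {}"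
  using assms finite_blowup by (auto simp: matchings_def intro: finite_subset)

lemma step_sym:
  assumes "distinct e" "F \<subseteq> blowup_tuples e n" "t \<in> blowup_tuples e n" "t' \<in> blowup_tuples e n"
    "\<forall>s\<in>F. set s \<inter> set t = {}" "\<forall>s\<in>F. set s \<inter> set t' = {}"
  shows "card {M \<in> matchings e n m. insert t F \<subseteq> M} \<le> card {M \<in> matchings e n m. insert t' F \<subseteq> M}"
proof -
  let ?f = "psw t t'"
  have fin: "finite {M \<in> matchings e n m. insert t' F \<subseteq> M}" by (rule finite_matchings_filter)
  have inj: "inj_on (image ?f) {M \<in> matchings e n m. insert t F \<subseteq> M}"
  proof (rule inj_onI)
    fix M1 M2 assume a: "M1 \<in> {M \<in> matchings e n m. insert t F \<subseteq> M}" "M2 \<in> {M \<in> matchings e n m. insert t F \<subseteq> M}"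
      "?f ` M1 = ?f ` M2"
    have m1: "M1 \<in> matchings e n m" and m2: "M2 \<in> matchings e n m" using a(1,2) by simp_all
    show "M1 = M2"
      using inj_on_image_eq_iff[OF psw_inj[OF assms(3,4)] matchingsD(1)[OF m1] matchingsD(1)[OF m2]] a(3) by simp
  qed
  have sub: "image ?f ` {M \<in> matchings e n m. insert t F \<subseteq> M} \<subseteq> {M \<in> matchings e n m. insert t' F \<subseteq> M}"
  proof safe
    fix M assume M: "M \<in> matchings e n m" "insert t F \<subseteq> M"
    note MD = matchingsD[OF M(1)]
    have inj: "inj_on ?f M" using psw_inj[OF assms(3,4)] MD(1) inj_on_subset by blast
    show "?f ` M \<in> matchings e n m"
      unfolding matchings_def
    proof (intro CollectI conjI ballI impI)
      show "?f ` M \<subseteq> blowup_tuples e n" using MD(1) psw_blowup[OF assms(3,4)] by blast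
      show "card (?f ` M) = m" using card_image[OF inj] MD(2) by simp
      fix u w assume "u \<in> ?f ` M" "w \<in> ?f ` M" "u \<noteq> w"
      then obtain x y where "x \<in> M" "y \<in> M" "u = ?f x" "w = ?f y" "x \<noteq> y" by blast
      thus "set u \<inter> set w = {}" using psw_disj[OF assms(1,3,4)] MD(1,4) by blast
    qed
    have tM: "t \<in> M" using M(2) by simp
    have "?f t \<in> ?f ` M" using tM by (rule imageI)
    thus "t' \<in> ?f ` M" using psw_t[OF assms(3,4)] by simp
    fix s assume s: "s \<in> F"
    have sb: "s \<in> blowup_tuples e n" using s assms(2) by blast
    have fx: "psw t t' s = s"
      apply (rule psw_fix[OF sb assms(3,4)])
      using blowup_disj[OF assms(1) sb assms(3)] blowup_disj[OF assms(1) sb assms(4)] s assms(5,6) by auto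
    have sM: "s \<in> M" using M(2) s by blast
    have "?f s \<in> ?f ` M" using sM by (rule imageI)
    thus "s \<in> ?f ` M" using fx by simp
  qed
show ?thesis by (rule card_inj_on_le[OF inj sub fin])
qed

lemma card_filter_sum: "finite A \<Longrightarrow> card {x \<in> A. P x} = (\<Sum>x\<in>A. if P x then 1 else 0::nat)"
  by (simp add: sum.If_cases Int_def conj_commute)

lemma step_sum:
  assumes "distinct e" "e \<noteq> []" "F \<subseteq> blowup_tuples e n" "finite F"
    and T: "T = {t' \<in> blowup_tuples e n. \<forall>s\<in>F. set s \<inter> set t' = {}}" and t: "t \<in> T"
  shows "card T * card {M \<in> matchings e n m. insert t F \<subseteq> M}
          \<le> (m - card F) * card {M \<in> matchings e n m. F \<subseteq> M}"
proof -
  let ?A = "{M \<in> matchings e n m. F \<subseteq> M}"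
  have fT: "finite T" unfolding T by (rule finite_blowup_filter)
  have fA: "finite ?A" by (rule finite_matchings_filter)
  have "card T * card {M \<in> matchings e n m. insert t F \<subseteq> M}
      = (\<Sum>t'\<in>T. card {M \<in> matchings e n m. insert t F \<subseteq> M})" by simp
  also have "\<dots> \<le> (\<Sum>t'\<in>T. card {M \<in> ?A. t' \<in> M})"
  proof (rule sum_mono)
    fix t' assume t': "t' \<in> T"
    have "card {M \<in> matchings e n m. insert t F \<subseteq> M} \<le> card {M \<in> matchings e n m. insert t' F \<subseteq> M}"
      apply (rule step_sym[OF assms(1,3)]) using t t' T by auto
    also have "{M \<in> matchings e n m. insert t' F \<subseteq> M} = {M \<in> ?A. t' \<in> M}" by auto
    finally show "card {M \<in> matchings e n m. insert t F \<subseteq> M} \<le> card {M \<in> ?A. t' \<in> M}" .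
  qed
  also have "\<dots> = (\<Sum>t'\<in>T. \<Sum>M\<in>?A. if t' \<in> M then 1 else 0)"
    using fA by (intro sum.cong refl card_filter_sum)
  also have "\<dots> = (\<Sum>M\<in>?A. \<Sum>t'\<in>T. if t' \<in> M then 1 else 0)" by (rule sum.swap)
  also have "\<dots> = (\<Sum>M\<in>?A. card {t' \<in> T. t' \<in> M})"
    using fT by (simp add: card_filter_sum)
  also have "\<dots> \<le> (\<Sum>M\<in>?A. m - card F)"
  proof (rule sum_mono)
    fix M assume M: "M \<in> ?A"
    note MD = matchingsD[of M e n m]
    have "{t' \<in> T. t' \<in> M} \<subseteq> M - F"
    proof safe
      fix s assume "s \<in> T" "s \<in> M" "s \<in> F"
      hence "set s \<inter> set s = {}" using T by auto
      hence "s = []" by simp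
      moreover have "length s = length e" using \<open>s \<in> T\<close> T by (auto simp: blowup_tuples_def)
      ultimately show False using assms(2) by simp
    qed
    hence "card {t' \<in> T. t' \<in> M} \<le> card (M - F)" using M MD by (intro card_mono) auto
    also have "card (M - F) = m - card F" using M MD assms(4) by (simp add: card_Diff_subset)
    finally show "card {t' \<in> T. t' \<in> M} \<le> m - card F" .
  qed
  also have "\<dots> = (m - card F) * card ?A" by simp
  finally show ?thesis .
qed

lemma card_T_ge:
  assumes "distinct e" "F \<subseteq> blowup_tuples e n" "finite F"
  shows "(n - card F) ^ length e \<le> card {t' \<in> blowup_tuples e n. \<forall>s\<in>F. set s \<inter> set t' = {}}"
proof -
  define A where "A i = {1..n} - (\<lambda>s. snd (s!i)) ` F" for i
  define g where "g h = map (\<lambda>i. (e!i, h i)) [0..<length e]" for h :: "nat \<Rightarrow> nat"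
  let ?T = "{t' \<in> blowup_tuples e n. \<forall>s\<in>F. set s \<inter> set t' = {}}"
  have "(n - card F) ^ length e = (\<Prod>i<length e. n - card F)" by simp
  also have "\<dots> \<le> (\<Prod>i<length e. card (A i))"
  proof (rule prod_mono, safe)
    fix i
    have "card {1..n} - card ((\<lambda>s. snd (s!i)) ` F) \<le> card (A i)"
      unfolding A_def using assms(3) by (intro diff_card_le_card_Diff) auto
    moreover have "card ((\<lambda>s. snd (s!i)) ` F) \<le> card F" using assms(3) card_image_le by blast
    ultimately show "n - card F \<le> card (A i)" by simp
  qed
  also have "\<dots> = card (PiE {..<length e} A)" by (simp add: card_PiE)
  also have "\<dots> = card (g ` PiE {..<length e} A)"
  proof (rule card_image[symmetric], rule inj_onI)
    fix h1 h2 assume h: "h1 \<in> PiE {..<length e} A" "h2 \<in> PiE {..<length e} A" "g h1 = g h2"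
    have "\<forall>i<length e. h1 i = h2 i"
    proof safe
      fix i assume i: "i < length e"
      have "g h1 ! i = g h2 ! i" using h by simp
      thus "h1 i = h2 i" using i by (simp add: g_def)
    qed
    thus "h1 = h2" using h(1,2) by (intro PiE_ext) auto
  qed
  also have "\<dots> \<le> card ?T"
  proof (rule card_mono)
    show "finite ?T" by (rule finite_blowup_filter)
    show "g ` PiE {..<length e} A \<subseteq> ?T"
    proof safe
      fix h assume h: "h \<in> PiE {..<length e} A"
      show gb: "g h \<in> blowup_tuples e n" using h by (auto simp: g_def blowup_tuples_def A_def PiE_def Pi_def)
      fix s x assume s: "s \<in> F" and x: "x \<in> set s" "x \<in> set (g h)"
      have sb: "s \<in> blowup_tuples e n" using s assms(2) by blast
      have "\<forall>i<length e. snd (s!i) \<noteq> snd (g h ! i)"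
      proof safe
        fix i assume i: "i < length e" "snd (s!i) = snd (g h ! i)"
        have "h i \<in> A i" using h i by auto
        moreover have "snd (g h ! i) = h i" using i by (simp add: g_def)
        ultimately show False using i s unfolding A_def by (metis DiffD2 image_eqI)
      qed
      hence "set s \<inter> set (g h) = {}" using blowup_disj[OF assms(1) sb gb] by simp
      thus "x \<in> {}" using x by blast
    qed
  qed
  finally show ?thesis .
qed

lemma count_main:
  assumes "distinct e" "e \<noteq> []" "m \<le> n" "finite F"
  shows "card {M \<in> matchings e n m. F \<subseteq> M} * (n - card F) ^ ((length e - 1) * card F)
         \<le> card (matchings e n m)"
  using assms(4)
proof (induction F rule: finite_induct)
  case empty
  then show ?case by simp
next
  case (insert t F)
  define f where "f = card F"
  define k' where "k' = length e - 1"
  have ke: "length e = Suc k'" using assms(2) k'_def by (cases e) auto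
  define X where "X = card {M \<in> matchings e n m. insert t F \<subseteq> M}"
  define Y where "Y = card {M \<in> matchings e n m. F \<subseteq> M}"
  have cins: "card (insert t F) = Suc f" using insert f_def by simp
  have XY: "X * (n - f) ^ k' \<le> Y"
  proof (cases "X = 0")
    case True then show ?thesis by simp
  next
    case False
    then obtain M where M: "M \<in> matchings e n m" "insert t F \<subseteq> M"
      unfolding X_def by (metis (no_types, lifting) card.empty empty_Collect_eq)
    note MD = matchingsD[OF M(1)]
    have Fb: "F \<subseteq> blowup_tuples e n" and tb: "t \<in> blowup_tuples e n" using M MD by auto
    have td: "\<forall>s\<in>F. set s \<inter> set t = {}" using M MD(4) insert(2) by blast
    define T where "T = {t' \<in> blowup_tuples e n. \<forall>s\<in>F. set s \<inter> set t' = {}}"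
    have tT: "t \<in> T" using tb td T_def by simp
    have 1: "card T * X \<le> (m - f) * Y"
      using step_sum[OF assms(1,2) Fb insert(1) T_def tT] X_def Y_def f_def by simp
    have 2: "(n - f) ^ Suc k' \<le> card T" using card_T_ge[OF assms(1) Fb insert(1)] T_def f_def ke by simp
    have "(n - f) ^ Suc k' * X \<le> (n - f) * Y"
    proof -
      have "(n - f) ^ Suc k' * X \<le> card T * X" using 2 by (rule mult_right_mono) simp
      also have "\<dots> \<le> (m - f) * Y" by (rule 1)
      also have "\<dots> \<le> (n - f) * Y" using assms(3) by (intro mult_right_mono) auto
      finally show ?thesis .
    qed
    show ?thesis
    proof (cases "n - f = 0")
      case True
      show ?thesis
      proof (cases "k' = 0")
        case True
        have "X \<le> Y" unfolding X_def Y_def using finite_matchings by (intro card_mono) auto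
        thus ?thesis using True by simp
      next
        case False thus ?thesis using \<open>n - f = 0\<close> by (simp add: zero_power)
      qed
    next
      case False
      thus ?thesis using \<open>(n - f) ^ Suc k' * X \<le> (n - f) * Y\<close> by (simp add: mult.assoc mult.commute mult.left_commute)
    qed
  qed
  have "X * (n - Suc f) ^ (k' * Suc f) \<le> X * ((n - f) ^ k' * (n - f) ^ (k' * f))"
  proof (rule mult_left_mono)
    have "(n - Suc f) ^ (k' * Suc f) \<le> (n - f) ^ (k' * Suc f)" by (rule power_mono) auto
    also have "\<dots> = (n - f) ^ k' * (n - f) ^ (k' * f)" by (simp add: power_add)
    finally show "(n - Suc f) ^ (k' * Suc f) \<le> (n - f) ^ k' * (n - f) ^ (k' * f)" .
  qed simp
  also have "\<dots> \<le> Y * (n - f) ^ (k' * f)" using XY by (metis mult.assoc mult_right_mono zero_le)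
  also have "\<dots> \<le> card (matchings e n m)" using insert(3) Y_def f_def k'_def by simp
  finally show ?case using cins X_def k'_def by simp
qed


lemma matchings_nonempty:
  assumes "distinct e" "e \<noteq> []" "m \<le> n"
  shows "matchings e n m \<noteq> {}"
proof -
  define g where "g a = map (\<lambda>i. (e!i, a)) [0..<length e]" for a :: nat
  have inj: "inj_on g {1..m}"
  proof (rule inj_onI)
    fix a b assume "g a = g b"
    hence "g a ! 0 = g b ! 0" by simp
    thus "a = b" using assms(2) by (simp add: g_def)
  qed
  have "g ` {1..m} \<in> matchings e n m"
    unfolding matchings_def
  proof (intro CollectI conjI ballI impI)
    show "g ` {1..m} \<subseteq> blowup_tuples e n" using assms(3) by (auto simp: g_def blowup_tuples_def)
    show "card (g ` {1..m}) = m" using card_image[OF inj] by simp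
    fix t s assume "t \<in> g ` {1..m}" "s \<in> g ` {1..m}" "t \<noteq> s"
    then obtain a b where ab: "t = g a" "s = g b" "a \<noteq> b" by blast
    show "set t \<inter> set s = {}" using ab by (auto simp: g_def)
  qed
  thus ?thesis by blast
qed

lemma prob_contains:
  assumes "distinct e" "e \<noteq> []" "m \<le> n" "finite F" "2 * card F \<le> n" "n > 0"
  shows "measure_pmf.prob (pmf_of_set (matchings e n m)) {M. F \<subseteq> M}
           \<le> (2 / real n) ^ ((length e - 1) * card F)"
proof -
  let ?M = "matchings e n m"
  let ?Y = "card {M \<in> ?M. F \<subseteq> M}"
  let ?d = "(length e - 1) * card F"
  have ne: "?M \<noteq> {}" using matchings_nonempty[OF assms(1-3)] .
  have cpos: "card ?M > 0" using ne finite_matchings by (simp add: card_gt_0_iff)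
  have c: "?Y * (n - card F) ^ ?d \<le> card ?M" using count_main[OF assms(1-4)] .
  have eq: "measure_pmf.prob (pmf_of_set ?M) {M. F \<subseteq> M} = real ?Y / real (card ?M)"
    using ne finite_matchings by (subst measure_pmf_of_set) (auto simp: Int_def conj_commute)
  have nf: "real n / 2 \<le> real (n - card F)" using assms(5) by simp
  have npos: "real n / 2 > 0" using assms(6) by simp
  have "real ?Y * (real n / 2) ^ ?d \<le> real ?Y * real (n - card F) ^ ?d"
  proof (rule mult_left_mono)
    show "(real n / 2) ^ ?d \<le> real (n - card F) ^ ?d" using nf npos by (intro power_mono) auto
  qed simp
  also have "\<dots> \<le> real (card ?M)"
  proof -
    have "real (?Y * (n - card F) ^ ?d) \<le> real (card ?M)" using c by (simp only: of_nat_le_iff)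
    thus ?thesis by simp
  qed
  finally have h: "real ?Y * (real n / 2) ^ ?d \<le> real (card ?M)" .
  have "real ?Y / real (card ?M) \<le> (2 / real n) ^ ?d"
  proof -
    have p: "(real n / 2) ^ ?d > 0" using npos by simp
    have "real ?Y \<le> real (card ?M) / (real n / 2) ^ ?d" using h p by (simp add: field_simps)
    hence "real ?Y / real (card ?M) \<le> 1 / (real n / 2) ^ ?d" using cpos by (simp add: field_simps)
    also have "\<dots> = (2 / real n) ^ ?d" by (simp add: power_divide)
    finally show ?thesis .
  qed
  thus ?thesis using eq by simp
qed

lemma prob_S:
  assumes es: "\<forall>e\<in>set es. length e = k \<and> distinct e" and k: "k \<ge> 1" and mn: "m \<le> n"
    and S: "S \<subseteq> ({..<length es} \<times> {..<K}) \<times> UNIV" "finite S" "2 * card S \<le> n" and n: "n > 0"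
  shows "measure_pmf.prob (sample_matchings es K n m) {Ms. \<forall>(ij,t)\<in>S. t \<in> Ms ij}
           \<le> (2 / real n) ^ ((k - 1) * card S)"
proof -
  define I where "I = {..<length es} \<times> {..<K}"
  define F where "F ij = {t. (ij, t) \<in> S}" for ij
  define P :: "nat \<times> nat \<Rightarrow> _" where "P = (\<lambda>(i, j). pmf_of_set (matchings (es ! i) n m))"
  have fI: "finite I" by (simp add: I_def)
  have SI: "S = Sigma I F" using S(1) by (auto simp: I_def F_def)
  have fF: "finite (F ij)" for ij using S(2) unfolding F_def
    by (rule finite_subset[rotated, OF finite_imageI[of S snd]]) force
  have cF: "card (F ij) \<le> card S" for ij
  proof -
    have "F ij = snd ` (S \<inter> {ij} \<times> UNIV)" by (force simp: F_def)
    also have "card \<dots> \<le> card (S \<inter> {ij} \<times> UNIV)" using S(2) by (intro card_image_le) auto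
    also have "\<dots> \<le> card S" using S(2) by (intro card_mono) auto
    finally show ?thesis .
  qed
  have cS: "card S = (\<Sum>ij\<in>I. card (F ij))" using SI fI fF by (simp add: card_SigmaI)
  let ?p = "sample_matchings es K n m"
  have sp: "?p = Pi_pmf I {} P" by (simp add: sample_matchings_def I_def P_def)
  have sub: "{Ms. \<forall>(ij,t)\<in>S. t \<in> Ms ij} \<inter> set_pmf ?p \<subseteq> PiE_dflt I {} (\<lambda>ij. {M. F ij \<subseteq> M})"
  proof
    fix Ms assume Ms: "Ms \<in> {Ms. \<forall>(ij,t)\<in>S. t \<in> Ms ij} \<inter> set_pmf ?p"
    have out: "\<forall>x. x \<notin> I \<longrightarrow> Ms x = {}" using Ms set_Pi_pmf_subset[OF fI, of "{}" P] unfolding sp by blast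
    have "\<forall>ij. F ij \<subseteq> Ms ij" using Ms unfolding F_def by blast
    thus "Ms \<in> PiE_dflt I {} (\<lambda>ij. {M. F ij \<subseteq> M})" using out unfolding PiE_dflt_def by blast
  qed
  have "measure_pmf.prob ?p {Ms. \<forall>(ij,t)\<in>S. t \<in> Ms ij}
      = measure_pmf.prob ?p ({Ms. \<forall>(ij,t)\<in>S. t \<in> Ms ij} \<inter> set_pmf ?p)"
    by (rule measure_Int_set_pmf[symmetric])
  also have "\<dots> \<le> measure_pmf.prob ?p (PiE_dflt I {} (\<lambda>ij. {M. F ij \<subseteq> M}))"
    using sub by (intro measure_pmf.finite_measure_mono) auto
  also have "\<dots> = (\<Prod>ij\<in>I. measure_pmf.prob (P ij) {M. F ij \<subseteq> M})"
    unfolding sp by (rule measure_Pi_pmf_PiE_dflt[OF fI])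
  also have "\<dots> \<le> (\<Prod>ij\<in>I. (2 / real n) ^ ((k - 1) * card (F ij)))"
  proof (rule prod_mono, safe)
    fix i j assume ij: "(i, j) \<in> I"
    hence ei: "es ! i \<in> set es" by (auto simp: I_def)
    have len: "length (es!i) = k" "distinct (es!i)" using es ei by auto
    hence ne: "es ! i \<noteq> []" using k by auto
    have "2 * card (F (i,j)) \<le> n" using cF[of "(i,j)"] S(3) by linarith
    thus "measure_pmf.prob (P (i, j)) {M. F (i, j) \<subseteq> M} \<le> (2 / real n) ^ ((k - 1) * card (F (i, j)))"
      using prob_contains[OF len(2) ne mn fF] n len by (simp add: P_def)
  qed (simp add: measure_nonneg)
  also have "\<dots> = (2 / real n) ^ ((k - 1) * card S)"
    by (simp add: cS power_sum[symmetric] power_mult[symmetric] sum_distrib_left) 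
  finally show ?thesis .
qed


lemma union_bound:
  fixes Vs :: "'v set" and es :: "'v list list" and p \<delta> :: real
  assumes es: "\<forall>e\<in>set es. length e = k \<and> distinct e" and k: "k \<ge> 1"
    and fV: "finite Vs" and mn: "m \<le> n" and n: "n > 0" and p: "p > 0"
    and small: "\<forall>s. real s \<le> \<delta> * real n \<longrightarrow> 2 * (nat \<lfloor>p * real s\<rfloor> + 1) \<le> n"
  shows "measure_pmf.prob (sample_matchings es K n m)
     {Ms. \<exists>V. V \<subseteq> Vs \<times> {1..n} \<and> real (card V) \<le> \<delta> * real n \<and>
        \<not> (\<Sum>ij\<in>{..<length es} \<times> {..<K}. real (card (induced_edges (Ms ij) V))) \<le> p * real (card V)}
   \<le> (\<Sum>s\<in>{1..nat \<lfloor>\<delta> * real n\<rfloor>}. real (card Vs * n choose s) *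
        real ((length es * K * s ^ k) choose (nat \<lfloor>p * real s\<rfloor> + 1)) *
        (2 / real n) ^ ((k - 1) * (nat \<lfloor>p * real s\<rfloor> + 1)))"
proof -
  define I where "I = {..<length es} \<times> {..<K}"
  define P :: "nat \<times> nat \<Rightarrow> _" where "P = (\<lambda>(i, j). pmf_of_set (matchings (es ! i) n m))"
  define ee where "ee s = nat \<lfloor>p * real s\<rfloor> + 1" for s :: nat
  define Tup where "Tup V = {t. set t \<subseteq> V \<and> length t = k}" for V :: "('v \<times> nat) set"
  define Vset where "Vset s = {V. V \<subseteq> Vs \<times> {1..n} \<and> card V = s}" for s
  define Sset where "Sset V s = {S. S \<subseteq> I \<times> Tup V \<and> card S = ee s}" for V s
  define E where "E S = {Ms. \<forall>(ij,t)\<in>S. t \<in> Ms ij}" for S :: "((nat \<times> nat) \<times> ('v \<times> nat) list) set"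
  define N where "N = nat \<lfloor>\<delta> * real n\<rfloor>"
  define Idx where "Idx = Sigma {1..N} (\<lambda>s. Sigma (Vset s) (\<lambda>V. Sset V s))"
  define B where "B = {Ms. \<exists>V. V \<subseteq> Vs \<times> {1..n} \<and> real (card V) \<le> \<delta> * real n \<and>
        \<not> (\<Sum>ij\<in>{..<length es} \<times> {..<K}. real (card (induced_edges (Ms ij) V))) \<le> p * real (card V)}"
  let ?p = "sample_matchings es K n m"
  have sp: "?p = Pi_pmf I {} P" by (simp add: sample_matchings_def I_def P_def)
  have fI: "finite I" by (simp add: I_def)
  have cI: "card I = length es * K" by (simp add: I_def card_cartesian_product)
  have fVn: "finite (Vs \<times> {1..n})" using fV by simp
  have fVset: "finite (Vset s)" for s using fVn unfolding Vset_def
    by (rule finite_subset[rotated, OF finite_Pow_iff[THEN iffD2]]) auto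
  have fTup: "finite V \<Longrightarrow> finite (Tup V)" for V unfolding Tup_def by (rule finite_lists_length_eq)
  have cTup: "finite V \<Longrightarrow> card (Tup V) = card V ^ k" for V unfolding Tup_def by (rule card_lists_length_eq)
  have fSset: "finite V \<Longrightarrow> finite (Sset V s)" for V s unfolding Sset_def
    using fTup fI by (intro finite_subset[rotated, OF finite_Pow_iff[THEN iffD2], of "I \<times> Tup V"]) auto
  have cSset: "V \<in> Vset s \<Longrightarrow> card (Sset V s) = (length es * K * s ^ k) choose ee s" for V s
  proof -
    assume V: "V \<in> Vset s"
    hence fin: "finite V" "card V = s" using fVn by (auto simp: Vset_def intro: finite_subset)
    have "card (Sset V s) = card (I \<times> Tup V) choose ee s"
      unfolding Sset_def using fTup[OF fin(1)] fI by (intro n_subsets) auto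
    thus ?thesis using cTup[OF fin(1)] fin(2) cI by (simp add: card_cartesian_product)
  qed
  have cVset: "card (Vset s) = card Vs * n choose s" for s
    unfolding Vset_def using n_subsets[OF fVn, of s] fV by (simp add: card_cartesian_product)
  have VsetF: "V \<in> Vset s \<Longrightarrow> finite V" for V s using fVn by (auto simp: Vset_def intro: finite_subset)
  have fIdx: "finite Idx" unfolding Idx_def using fVset fSset VsetF
    by (intro finite_SigmaI) auto
  have cover: "B \<inter> set_pmf ?p \<subseteq> (\<Union>x\<in>Idx. E (snd (snd x)))"
  proof
    fix Ms assume Ms: "Ms \<in> B \<inter> set_pmf ?p"
    have MsM: "Ms (i, j) \<in> matchings (es ! i) n m" if "(i, j) \<in> I" for i j
    proof -
      have "Ms \<in> PiE_dflt I {} (set_pmf \<circ> P)" using Ms set_Pi_pmf_subset'[OF fI, of "{}" P] sp by auto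
      hence "Ms (i,j) \<in> set_pmf (P (i,j))" using that by (auto simp: PiE_dflt_def)
      moreover have "es ! i \<in> set es" using that by (auto simp: I_def)
      hence "matchings (es ! i) n m \<noteq> {}" using es k mn by (intro matchings_nonempty) auto
      ultimately show ?thesis by (simp add: P_def finite_matchings)
    qed
    obtain V where V: "V \<subseteq> Vs \<times> {1..n}" "real (card V) \<le> \<delta> * real n"
      "(\<Sum>ij\<in>I. real (card (induced_edges (Ms ij) V))) > p * real (card V)"
      using Ms unfolding B_def I_def by auto
    define s where "s = card V"
    have fVV: "finite V" using V(1) fVn finite_subset by blast
    define W where "W = Sigma I (\<lambda>ij. induced_edges (Ms ij) V)"
    have fMs: "finite (Ms ij)" if "ij \<in> I" for ij using MsM that matchingsD(3) by (cases ij) blast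
    have fin_ind: "finite (induced_edges (Ms ij) V)" if "ij \<in> I" for ij
      using fMs[OF that] by (simp add: induced_edges_def)
    have cW: "real (card W) = (\<Sum>ij\<in>I. real (card (induced_edges (Ms ij) V)))"
      unfolding W_def using fI fin_ind by simp
    have Wsub: "W \<subseteq> I \<times> Tup V"
    proof safe
      fix i j t assume "((i,j), t) \<in> W"
      hence ij: "(i,j) \<in> I" and t: "t \<in> Ms (i,j)" "set t \<subseteq> V" by (auto simp: W_def induced_edges_def)
      have "es ! i \<in> set es" using ij by (auto simp: I_def)
      hence "length (es ! i) = k" using es by auto
      hence "length t = k" using matchingsD(1)[OF MsM[OF ij]] t by (auto simp: blowup_tuples_def)
      thus "t \<in> Tup V" using t by (simp add: Tup_def)
    qed (auto simp: W_def)
    have s1: "s \<ge> 1"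
    proof (rule ccontr)
      assume "\<not> s \<ge> 1"
      hence "card V = 0" using s_def by simp
      hence V0: "V = {}" using fVV by simp
      have "Tup V = {}"
      proof safe
        fix t assume "t \<in> Tup V"
        hence "set t \<subseteq> {}" "length t = k" using V0 by (auto simp: Tup_def)
        thus "t \<in> {}" using k by simp
      qed
      hence "W = {}" using Wsub by blast
      hence "real (card W) = 0" by simp
      moreover have "p * real (card V) = 0" using V0 by simp
      ultimately show False using V(3) cW by linarith
    qed
    have sN: "s \<le> N" using V(2) s_def unfolding N_def by (simp add: le_nat_floor)
    have "real (card W) > p * real s" using V(3) cW s_def by simp
    moreover have "real_of_int \<lfloor>p * real s\<rfloor> \<le> p * real s" by (rule of_int_floor_le)
    ultimately have "real_of_int \<lfloor>p * real s\<rfloor> < real (card W)" by linarith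
    hence lt: "\<lfloor>p * real s\<rfloor> < int (card W)" by (metis of_int_less_iff of_int_of_nat_eq)
    have "0 \<le> \<lfloor>p * real s\<rfloor>" using p by simp
    hence "nat \<lfloor>p * real s\<rfloor> < card W" using lt by (simp add: nat_less_iff)
    hence "ee s \<le> card W" unfolding ee_def by simp
    then obtain S where S: "S \<subseteq> W" "card S = ee s" "finite S" by (rule obtain_subset_with_card_n)
    have "(s, V, S) \<in> Idx" unfolding Idx_def Vset_def Sset_def using s1 sN V(1) s_def S Wsub by auto
    moreover have "Ms \<in> E S" using S(1) unfolding E_def W_def induced_edges_def by auto
    ultimately show "Ms \<in> (\<Union>x\<in>Idx. E (snd (snd x)))" by force
  qed
  have "measure_pmf.prob ?p B = measure_pmf.prob ?p (B \<inter> set_pmf ?p)"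
    by (rule measure_Int_set_pmf[symmetric])
  also have "\<dots> \<le> measure_pmf.prob ?p (\<Union>x\<in>Idx. E (snd (snd x)))"
    using cover by (intro measure_pmf.finite_measure_mono) auto
  also have "\<dots> \<le> (\<Sum>x\<in>Idx. measure_pmf.prob ?p (E (snd (snd x))))"
    using fIdx by (intro measure_pmf.finite_measure_subadditive_finite) auto
  also have "\<dots> \<le> (\<Sum>x\<in>Idx. (2 / real n) ^ ((k - 1) * ee (fst x)))"
  proof (rule sum_mono)
    fix x assume x: "x \<in> Idx"
    then obtain s V S where xe: "x = (s, V, S)" and s: "s \<in> {1..N}" and V: "V \<in> Vset s" and S: "S \<in> Sset V s"
      unfolding Idx_def by auto
    have fVV: "finite V" using V fVn by (auto simp: Vset_def intro: finite_subset)
    have S1: "S \<subseteq> I \<times> Tup V" "card S = ee s" using S unfolding Sset_def by auto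
    have SS: "S \<subseteq> ({..<length es} \<times> {..<K}) \<times> UNIV" "finite S" "card S = ee s"
      using S1(1) apply (force simp: I_def)
      using finite_subset[OF S1(1)] fTup[OF fVV] fI apply blast
      using S1(2) .
    have sN: "1 \<le> s" "s \<le> nat \<lfloor>\<delta> * real n\<rfloor>" using s unfolding N_def by auto
    hence "1 \<le> \<lfloor>\<delta> * real n\<rfloor>" by linarith
    hence "real (nat \<lfloor>\<delta> * real n\<rfloor>) = real_of_int \<lfloor>\<delta> * real n\<rfloor>" by simp
    also have "\<dots> \<le> \<delta> * real n" by (rule of_int_floor_le)
    finally have "real s \<le> \<delta> * real n" using sN(2) by (meson of_nat_le_iff order_trans)
    hence "2 * card S \<le> n" using small SS(3) ee_def by auto
    thus "measure_pmf.prob ?p (E (snd (snd x))) \<le> (2 / real n) ^ ((k - 1) * ee (fst x))"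
      using prob_S[OF es k mn SS(1,2) _ n] SS(3) xe unfolding E_def by simp
  qed
  also have "\<dots> = (\<Sum>s\<in>{1..N}. \<Sum>y\<in>Sigma (Vset s) (\<lambda>V. Sset V s). (2 / real n) ^ ((k - 1) * ee s))"
  proof -
    have fSig: "finite (Sigma (Vset s) (\<lambda>V. Sset V s))" for s
      using fVset fSset VsetF by (intro finite_SigmaI) auto
    have "(\<Sum>s\<in>{1..N}. \<Sum>y\<in>Sigma (Vset s) (\<lambda>V. Sset V s). (2 / real n) ^ ((k - 1) * ee s))
        = (\<Sum>(s,y)\<in>Idx. (2 / real n) ^ ((k - 1) * ee s))"
      unfolding Idx_def by (rule sum.Sigma) (auto simp: fSig)
    also have "\<dots> = (\<Sum>x\<in>Idx. (2 / real n) ^ ((k - 1) * ee (fst x)))" by (simp add: case_prod_beta')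
    finally show ?thesis by simp
  qed
  also have "\<dots> = (\<Sum>s\<in>{1..N}. real (card Vs * n choose s) *
        real ((length es * K * s ^ k) choose ee s) * (2 / real n) ^ ((k - 1) * ee s))"
  proof (rule sum.cong[OF refl])
    fix s
    have "card (Sigma (Vset s) (\<lambda>V. Sset V s)) = (\<Sum>V\<in>Vset s. card (Sset V s))"
      using fVset fSset VsetF by (intro card_SigmaI) auto
    also have "\<dots> = (\<Sum>V\<in>Vset s. (length es * K * s ^ k) choose ee s)" using cSset by simp
    also have "\<dots> = card (Vset s) * ((length es * K * s ^ k) choose ee s)" by simp
    finally show "(\<Sum>y\<in>Sigma (Vset s) (\<lambda>V. Sset V s). (2 / real n) ^ ((k - 1) * ee s)) =
        real (card Vs * n choose s) * real ((length es * K * s ^ k) choose ee s) * (2 / real n) ^ ((k - 1) * ee s)"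
      using cVset by simp
  qed
  finally show ?thesis unfolding B_def ee_def N_def I_def .
qed


lemma pow_div_fact_le_exp:
  fixes x :: real assumes "x \<ge> 0"
  shows "x ^ r / fact r \<le> exp x"
proof -
  have s: "(\<lambda>n. x ^ n / fact n) sums exp x" using exp_converges[of x] by (simp add: divide_inverse mult.commute)
  have "(\<Sum>n\<in>{r}. x ^ n / fact n) \<le> suminf (\<lambda>n. x ^ n / fact n)"
    by (rule sum_le_suminf) (use s assms in \<open>auto simp: sums_iff\<close>)
  thus ?thesis using s by (simp add: sums_iff)
qed

lemma binom_bound:
  assumes "r \<ge> 1"
  shows "real (N choose r) \<le> (exp 1 * real N / real r) ^ r"
proof -
  have r0: "real r > 0" using assms by simp
  have "real (N choose r) * fact r \<le> real N ^ r"
    using binomial_fact_pow[of N r] by (metis of_nat_fact of_nat_le_iff of_nat_mult of_nat_power)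
  hence 1: "real (N choose r) \<le> real N ^ r / fact r" by (simp add: field_simps)
  have "real r ^ r / fact r \<le> exp (real r)" by (rule pow_div_fact_le_exp) simp
  hence "1 / fact r \<le> exp (real r) / real r ^ r" using r0 by (simp add: field_simps)
  hence "real N ^ r / fact r \<le> real N ^ r * (exp (real r) / real r ^ r)"
    by (metis divide_inverse mult_left_mono zero_le_power of_nat_0_le_iff inverse_eq_divide)
  also have "\<dots> = (exp 1 * real N / real r) ^ r"
    using exp_of_nat_mult[of r "1::real"] by (simp add: power_divide power_mult_distrib)
  finally show ?thesis using 1 by linarith
qed


lemma pow_rearr: fixes a p s x :: real and n :: nat and j e :: nat
  assumes "x = s / real n"
  shows "(a * s ^ j / p) ^ e * (2 / real n) ^ (j * e) = (a * 2 ^ j / p * x ^ j) ^ e"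
proof -
  have i: "(2/real n)^(j*e) = ((2/real n)^j)^e" by (simp add: power_mult)
  have ii: "s ^ j * (2/real n) ^ j = 2 ^ j * x ^ j"
  proof -
    have "s * (2 / real n) = 2 * x" using assms by simp
    thus ?thesis by (metis power_mult_distrib)
  qed
  have iii: "a * s ^ j / p * (2 / real n) ^ j = a / p * (s ^ j * (2/real n) ^ j)" by simp
  have iv: "a / p * (2 ^ j * x ^ j) = a * 2 ^ j / p * x ^ j" by simp
  have v: "(a * s ^ j / p) ^ e * ((2 / real n) ^ j) ^ e = (a * s ^ j / p * (2 / real n) ^ j) ^ e" by (rule power_mult_distrib[symmetric])
  show ?thesis unfolding i v iii ii iv ..
qed

lemma term_bound:
  fixes C0 LK k n s :: nat and p A D \<gamma> :: real
  assumes k: "k \<ge> 2" and p: "p > 0" and \<gamma>: "\<gamma> = real (k - 1) * p - 1"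
    and A: "A = max 1 (exp 1 * real LK * 2 ^ (k - 1) / p)" and D: "D \<ge> exp 1 * real C0 * A powr p"
    and n: "n > 0" and s: "s \<ge> 1" "s \<le> n"
  shows "real (C0 * n choose s) * real ((LK * s ^ k) choose (nat \<lfloor>p * real s\<rfloor> + 1)) *
           (2 / real n) ^ ((k - 1) * (nat \<lfloor>p * real s\<rfloor> + 1))
         \<le> A * (D * (real s / real n) powr \<gamma>) ^ s"
proof -
  define e where "e = nat \<lfloor>p * real s\<rfloor> + 1"
  define x where "x = real s / real n"
  have x0: "x > 0" and x1: "x \<le> 1" using n s by (auto simp: x_def)
  have A1: "A \<ge> 1" using A by simp
  have ps0: "p * real s \<ge> 0" using p by simp
  have e_ge: "real e \<ge> p * real s"
  proof -
    have "p * real s < real_of_int \<lfloor>p * real s\<rfloor> + 1" by (rule real_of_int_floor_add_one_gt)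
    moreover have "real e = real_of_int \<lfloor>p * real s\<rfloor> + 1" using ps0 by (simp add: e_def)
    ultimately show ?thesis by linarith
  qed
  have e_le: "real e \<le> p * real s + 1"
  proof -
    have "real e = real_of_int \<lfloor>p * real s\<rfloor> + 1" using ps0 by (simp add: e_def)
    thus ?thesis using of_int_floor_le[of "p * real s"] by linarith
  qed
  have e1: "e \<ge> 1" by (simp add: e_def)
  have h1: "real (C0 * n choose s) \<le> (exp 1 * real C0 / x) ^ s"
    using binom_bound[OF s(1), of "C0 * n"] n by (simp add: x_def field_simps)
  have h2: "real ((LK * s ^ k) choose e) \<le> (exp 1 * real LK * real s ^ (k - 1) / p) ^ e"
  proof -
    have "real ((LK * s ^ k) choose e) \<le> (exp 1 * real (LK * s ^ k) / real e) ^ e" by (rule binom_bound[OF e1])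
    also have "\<dots> \<le> (exp 1 * real LK * real s ^ (k - 1) / p) ^ e"
    proof (rule power_mono)
      have sk: "real s ^ k = real s * real s ^ (k - 1)" using k by (metis Suc_diff_1 less_le_trans numeral_2_eq_2 power_Suc zero_less_Suc)
      have "exp 1 * real (LK * s ^ k) / real e \<le> exp 1 * real (LK * s ^ k) / (p * real s)"
      proof (rule divide_left_mono)
        show "0 < real e * (p * real s)" using e1 p s by (intro mult_pos_pos) auto
      qed (use e_ge in auto)
      also have "\<dots> = exp 1 * real LK * real s ^ (k - 1) / p" using s p by (simp add: sk field_simps)
      finally show "exp 1 * real (LK * s ^ k) / real e \<le> exp 1 * real LK * real s ^ (k - 1) / p" .
    qed simp
    finally show ?thesis .
  qed
  have h3: "(exp 1 * real LK * real s ^ (k - 1) / p) ^ e * (2 / real n) ^ ((k - 1) * e)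
            \<le> A ^ e * x ^ ((k - 1) * e)"
  proof -
    have "(exp 1 * real LK * real s ^ (k - 1) / p) ^ e * (2 / real n) ^ ((k - 1) * e)
        = (exp 1 * real LK * 2 ^ (k - 1) / p * x ^ (k - 1)) ^ e"
      by (rule pow_rearr) (simp add: x_def)
    also have "\<dots> \<le> (A * x ^ (k - 1)) ^ e"
      using x0 p A by (intro power_mono mult_right_mono) auto
    also have "\<dots> = A ^ e * x ^ ((k - 1) * e)" by (simp add: power_mult_distrib power_mult)
    finally show ?thesis .
  qed
  have h4: "A ^ e \<le> A * (A powr p) ^ s"
  proof -
    have "A ^ e = A powr real e" using A1 by (simp add: powr_realpow)
    also have "\<dots> \<le> A powr (p * real s + 1)" using e_le A1 by (intro powr_mono) auto
    also have "\<dots> = A * (A powr p) ^ s" using A1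
      by (simp add: powr_add powr_powr[symmetric] powr_realpow mult.commute)
    finally show ?thesis .
  qed
  have h5: "x ^ ((k - 1) * e) \<le> x ^ s * (x powr \<gamma>) ^ s"
  proof -
    have "x ^ ((k - 1) * e) = x powr real ((k - 1) * e)" by (rule powr_realpow[OF x0, symmetric])
    also have "\<dots> \<le> x powr (real (k - 1) * p * real s)"
    proof (rule powr_mono')
      have "real (k - 1) * (p * real s) \<le> real (k - 1) * real e" using e_ge by (intro mult_left_mono) auto
      thus "real (k - 1) * p * real s \<le> real ((k - 1) * e)" by (simp add: mult.assoc)
    qed (use x0 x1 in auto)
    also have "real (k - 1) * p * real s = real s + \<gamma> * real s"
    proof -
      have kp: "real (k - 1) * p = 1 + \<gamma>" using \<gamma> by simp
      have "real (k - 1) * p * real s = (1 + \<gamma>) * real s" by (simp only: kp)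
      also have "\<dots> = real s + \<gamma> * real s" by (simp add: distrib_right)
      finally show ?thesis .
    qed
    also have "x powr (real s + \<gamma> * real s) = x ^ s * (x powr \<gamma>) ^ s" using x0
      by (simp add: powr_add powr_powr[symmetric] powr_realpow mult.commute)
    finally show ?thesis .
  qed
  have nn: "0 \<le> real ((LK * s ^ k) choose e)" "0 \<le> (2 / real n) ^ ((k - 1) * e)" by auto
  have "real (C0 * n choose s) * real ((LK * s ^ k) choose e) * (2 / real n) ^ ((k - 1) * e)
      \<le> (exp 1 * real C0 / x) ^ s * ((exp 1 * real LK * real s ^ (k - 1) / p) ^ e * (2 / real n) ^ ((k - 1) * e))"
  proof -
    have "real (C0 * n choose s) * real ((LK * s ^ k) choose e) * (2 / real n) ^ ((k - 1) * e)
        = real (C0 * n choose s) * (real ((LK * s ^ k) choose e) * (2 / real n) ^ ((k - 1) * e))"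
      by (rule mult.assoc)
    also have "\<dots> \<le> (exp 1 * real C0 / x) ^ s * ((exp 1 * real LK * real s ^ (k - 1) / p) ^ e * (2 / real n) ^ ((k - 1) * e))"
      by (rule mult_mono[OF h1 mult_right_mono[OF h2 nn(2)]]) (use x0 nn in auto)
    finally show ?thesis .
  qed
  also have "\<dots> \<le> (exp 1 * real C0 / x) ^ s * (A * (A powr p) ^ s * (x ^ s * (x powr \<gamma>) ^ s))"
  proof (rule mult_left_mono)
    have "A ^ e * x ^ ((k - 1) * e) \<le> A * (A powr p) ^ s * (x ^ s * (x powr \<gamma>) ^ s)"
      using h4 h5 x0 A1 by (intro mult_mono) auto
    thus "(exp 1 * real LK * real s ^ (k - 1) / p) ^ e * (2 / real n) ^ ((k - 1) * e)
        \<le> A * (A powr p) ^ s * (x ^ s * (x powr \<gamma>) ^ s)" using h3 by linarith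
  qed (use x0 in simp)
  also have "\<dots> = A * (exp 1 * real C0 * A powr p * x powr \<gamma>) ^ s"
  proof -
    have q1: "(exp 1 * real C0 / x) ^ s * x ^ s = (exp 1 * real C0) ^ s"
      using x0 by (simp add: power_mult_distrib[symmetric])
    have "(exp 1 * real C0 / x) ^ s * (A * (A powr p) ^ s * (x ^ s * (x powr \<gamma>) ^ s))
        = A * (((exp 1 * real C0 / x) ^ s * x ^ s) * (A powr p) ^ s * (x powr \<gamma>) ^ s)"
      by (simp add: mult_ac)
    also have "\<dots> = A * ((exp 1 * real C0) ^ s * (A powr p) ^ s * (x powr \<gamma>) ^ s)" by (simp only: q1)
    also have "\<dots> = A * (exp 1 * real C0 * A powr p * x powr \<gamma>) ^ s" by (simp only: power_mult_distrib)
    finally show ?thesis .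
  qed
  also have "\<dots> \<le> A * (D * x powr \<gamma>) ^ s"
    using D A1 x0 by (intro mult_left_mono power_mono mult_right_mono) auto
  finally show ?thesis unfolding e_def x_def .
qed


lemma geom_half: "(\<Sum>s\<in>{1..N}. (1/2::real) ^ (s - 1)) = 2 - 2 * (1/2) ^ N"
  by (induction N) (auto simp: sum.cl_ivl_Suc)

lemma sum_bound:
  fixes N n :: nat and D \<gamma> \<delta> :: real
  assumes D: "D \<ge> 1" and \<gamma>: "\<gamma> > 0" and \<delta>: "\<delta> > 0" "\<delta> \<le> 1" and D\<delta>: "D * \<delta> powr \<gamma> \<le> 1/2"
    and n: "n > 0" and N: "real N \<le> \<delta> * real n"
  shows "(\<Sum>s\<in>{1..N}. (D * (real s / real n) powr \<gamma>) ^ s)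
         \<le> 2 * D * real n powr (-\<gamma>/2) + real n * (1/2) powr sqrt (real n)"
proof -
  define r where "r = D * real n powr (-\<gamma>/2)"
  define c where "c = (1/2::real) powr sqrt (real n)"
  have r0: "r \<ge> 0" using D by (simp add: r_def)
  have tm: "(D * (real s / real n) powr \<gamma>) ^ s \<le> r * (1/2) ^ (s - 1) + c" if s: "s \<in> {1..N}" for s
  proof -
    define q where "q = D * (real s / real n) powr \<gamma>"
    have q0: "q \<ge> 0" using D by (simp add: q_def)
    have sd: "real s / real n \<le> \<delta>" using s N n by (auto simp: field_simps)
    have "q \<le> D * \<delta> powr \<gamma>" unfolding q_def using D \<gamma> sd by (intro mult_left_mono powr_mono2) auto
    hence qh: "q \<le> 1/2" using D\<delta> by linarith
    show ?thesis
    proof (cases "real s \<le> sqrt (real n)")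
      case True
      have sn: "real s / real n \<le> real n powr (-1/2)"
      proof -
        have "real s / real n \<le> sqrt (real n) / real n" using True n by (intro divide_right_mono) auto
        also have "sqrt (real n) / real n = real n powr (-1/2)"
        proof -
          have "real n powr (-1/2) = real n powr (1/2 - 1)" by simp
          also have "\<dots> = real n powr (1/2) / real n powr 1" by (rule powr_diff)
          also have "\<dots> = sqrt (real n) / real n" using n by (simp add: powr_half_sqrt)
          finally show ?thesis by simp
        qed
        finally show ?thesis .
      qed
      have "q \<le> D * (real n powr (-1/2)) powr \<gamma>" unfolding q_def using D \<gamma> sn
        by (intro mult_left_mono powr_mono2) auto
      also have "\<dots> = r" by (simp add: r_def powr_powr)
      finally have qr: "q \<le> r" .
      have "q ^ s = q * q ^ (s - 1)" using s by (cases s) auto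
      also have "\<dots> \<le> r * (1/2) ^ (s - 1)" using qr qh q0 r0 by (intro mult_mono power_mono) auto
      finally have qs: "q ^ s \<le> r * (1/2) ^ (s - 1)" .
      have c0: "c \<ge> 0" by (simp add: c_def)
      show ?thesis using qs c0 unfolding q_def[symmetric] by linarith
    next
      case False
      have "q ^ s \<le> (1/2) ^ s" using q0 qh by (intro power_mono) auto
      also have "(1/2::real) ^ s = (1/2) powr real s" by (simp add: powr_realpow)
      also have "\<dots> \<le> c" unfolding c_def using False by (intro powr_mono') auto
      finally have qs: "q ^ s \<le> c" .
      have "r * (1/2) ^ (s - 1) \<ge> 0" using r0 by simp
      thus ?thesis using qs unfolding q_def[symmetric] by linarith
    qed
  qed
  have "(\<Sum>s\<in>{1..N}. (D * (real s / real n) powr \<gamma>) ^ s) \<le> (\<Sum>s\<in>{1..N}. r * (1/2) ^ (s - 1) + c)"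
    by (rule sum_mono) (rule tm)
  also have "\<dots> = r * (\<Sum>s\<in>{1..N}. (1/2::real) ^ (s - 1)) + real N * c"
    by (simp add: sum.distrib sum_distrib_left)
  also have "\<dots> = r * (2 - 2 * (1/2) ^ N) + real N * c" by (simp only: geom_half)
  also have "\<dots> \<le> r * 2 + real n * c"
  proof (rule add_mono)
    have "(1/2::real) ^ N \<ge> 0" by simp
    hence "2 - 2 * (1/2::real) ^ N \<le> 2" by linarith
    thus "r * (2 - 2 * (1/2) ^ N) \<le> r * 2" using r0 by (rule mult_left_mono)
    have "\<delta> * real n \<le> 1 * real n" by (rule mult_right_mono) (use \<delta> in auto)
    hence "real N \<le> real n" using N by linarith
    thus "real N * c \<le> real n * c" by (intro mult_right_mono) (auto simp: c_def)
  qed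
  finally show ?thesis by (simp add: r_def c_def mult.commute mult.left_commute)
qed

lemma g_lim:
  fixes A D \<gamma> :: real assumes "\<gamma> > 0"
  shows "(\<lambda>n. A * (2 * D * real n powr (-\<gamma>/2) + real n * (1/2) powr sqrt (real n))) \<longlonglongrightarrow> 0"
proof -
  have 1: "(\<lambda>n. real n powr (-\<gamma>/2)) \<longlonglongrightarrow> 0" using assms by real_asymp
  have 2: "(\<lambda>n. real n * (1/2) powr sqrt (real n)) \<longlonglongrightarrow> 0" by real_asymp
  have "(\<lambda>n. A * (2 * D * real n powr (-\<gamma>/2) + real n * (1/2) powr sqrt (real n))) \<longlonglongrightarrow> A * (2 * D * 0 + 0)"
    by (intro tendsto_intros 1 2)
  thus ?thesis by simp
qed


theorem lemma7p4:
  fixes Vs :: "'v set" and es :: "'v list list" and k K :: nat and \<alpha> p :: real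
  assumes "k \<ge> 2"
    and "finite Vs"
    and "\<forall>e\<in>set es. length e = k \<and> distinct e \<and> set e \<subseteq> Vs"
    and "K > 0"
    and "0 < \<alpha>" and "\<alpha> \<le> 1"
    and "p > 1 / (real k - 1)"
  shows "\<exists>\<delta>::real. 0 < \<delta> \<and> \<delta> < 1 \<and>
    (\<forall>\<epsilon>>0. \<exists>n0. \<forall>n\<ge>n0. \<alpha> * real n \<in> \<int> \<longrightarrow>
       measure_pmf.prob (sample_matchings es K n (nat \<lfloor>\<alpha> * real n\<rfloor>))
         {Ms. \<forall>V. V \<subseteq> Vs \<times> {1..n} \<and> real (card V) \<le> \<delta> * real n \<longrightarrow>
                (\<Sum>ij\<in>{..<length es} \<times> {..<K}. real (card (induced_edges (Ms ij) V)))
                  \<le> p * real (card V)}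
       \<ge> 1 - \<epsilon>)"
proof -
  note k = assms(1) and fV = assms(2) and \<alpha> = assms(5,6)
  have es: "\<forall>e\<in>set es. length e = k \<and> distinct e" using assms(3) by auto
  have k1: "k \<ge> 1" using k by simp
  have km: "real k - 1 = real (k - 1)" using k by simp
  have km0: "real (k - 1) > 0" using k by simp
  have p': "1 / real (k - 1) < p" using assms(7) unfolding km .
  have lt: "1 / real (k - 1) * real (k - 1) < p * real (k - 1)" by (rule mult_strict_right_mono[OF p' km0])
  have eq1: "1 / real (k - 1) * real (k - 1) = 1" using km0 by simp
  have pk: "1 < p * real (k - 1)" using lt unfolding eq1 .
  have "1 / real (k - 1) > 0" using km0 by simp
  hence p: "p > 0" using p' by (rule order.strict_trans)
  define \<gamma> where "\<gamma> = real (k - 1) * p - 1"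
  have \<gamma>0: "\<gamma> > 0"
  proof -
    have "\<gamma> = p * real (k - 1) - 1" unfolding \<gamma>_def by (simp only: mult.commute)
    thus ?thesis using pk by (simp only: diff_gt_0_iff_gt)
  qed
  define LK where "LK = length es * K"
  define C0 where "C0 = card Vs"
  define A where "A = max 1 (exp 1 * real LK * 2 ^ (k - 1) / p)"
  define D where "D = max 1 (exp 1 * real C0 * A powr p)"
  define \<delta> where "\<delta> = min (1/2) (min (1 / (4 * p)) ((1 / (2 * D)) powr (1 / \<gamma>)))"
  have A1: "A \<ge> 1" by (simp add: A_def)
  have D1: "D \<ge> 1" by (simp add: D_def)
  have D2: "D \<ge> exp 1 * real C0 * A powr p" by (simp add: D_def)
  have \<delta>0: "\<delta> > 0" using p D1 by (simp add: \<delta>_def)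
  have \<delta>1: "\<delta> \<le> 1/2" by (simp add: \<delta>_def)
  have \<delta>p: "\<delta> \<le> 1 / (4 * p)" by (simp add: \<delta>_def)
  have D\<delta>: "D * \<delta> powr \<gamma> \<le> 1/2"
  proof -
    have "\<delta> powr \<gamma> \<le> ((1 / (2 * D)) powr (1 / \<gamma>)) powr \<gamma>"
      using \<delta>0 \<gamma>0 by (intro powr_mono2) (auto simp: \<delta>_def)
    also have "\<dots> = 1 / (2 * D)" using \<gamma>0 D1 by (simp add: powr_powr)
    finally have "D * \<delta> powr \<gamma> \<le> D * (1 / (2 * D))" using D1 by (intro mult_left_mono) auto
    thus ?thesis using D1 by simp
  qed
  define g where "g n = A * (2 * D * real n powr (-\<gamma>/2) + real n * (1/2) powr sqrt (real n))" for n :: nat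
  have glim: "g \<longlonglongrightarrow> 0" unfolding g_def by (rule g_lim[OF \<gamma>0])
  show ?thesis
  proof (intro exI[of _ \<delta>] conjI allI impI)
    show "0 < \<delta>" by (rule \<delta>0)
    show "\<delta> < 1" using \<delta>1 by simp
    fix \<epsilon> :: real assume \<epsilon>: "\<epsilon> > 0"
    from order_tendstoD(2)[OF glim \<epsilon>] obtain n1 where n1: "\<forall>n\<ge>n1. g n < \<epsilon>"
      by (auto simp: eventually_sequentially)
    show "\<exists>n0. \<forall>n\<ge>n0. \<alpha> * real n \<in> \<int> \<longrightarrow>
       measure_pmf.prob (sample_matchings es K n (nat \<lfloor>\<alpha> * real n\<rfloor>))
         {Ms. \<forall>V. V \<subseteq> Vs \<times> {1..n} \<and> real (card V) \<le> \<delta> * real n \<longrightarrow>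
                (\<Sum>ij\<in>{..<length es} \<times> {..<K}. real (card (induced_edges (Ms ij) V)))
                  \<le> p * real (card V)}
       \<ge> 1 - \<epsilon>"
    proof (intro exI[of _ "max n1 4"] allI impI)
      fix n :: nat assume nn: "max n1 4 \<le> n" and "\<alpha> * real n \<in> \<int>"
      have n4: "n \<ge> 4" and nn1: "n \<ge> n1" using nn by auto
      have n0: "n > 0" using n4 by simp
      define m where "m = nat \<lfloor>\<alpha> * real n\<rfloor>"
      have mn: "m \<le> n"
      proof -
        have "\<alpha> * real n \<le> 1 * real n" by (rule mult_right_mono) (use \<alpha> in auto)
        hence "\<alpha> * real n \<le> real n" by simp
        thus ?thesis unfolding m_def by (simp add: nat_le_iff floor_le_iff)
      qed
      have small: "\<forall>s. real s \<le> \<delta> * real n \<longrightarrow> 2 * (nat \<lfloor>p * real s\<rfloor> + 1) \<le> n"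
      proof (intro allI impI)
        fix s :: nat assume s: "real s \<le> \<delta> * real n"
        have "real (nat \<lfloor>p * real s\<rfloor>) \<le> p * real s" using p by (simp add: of_int_floor_le)
        also have "\<dots> \<le> p * (\<delta> * real n)" using p s by (intro mult_left_mono) auto
        also have "\<dots> \<le> p * (1 / (4 * p) * real n)" using p \<delta>p by (intro mult_left_mono mult_right_mono) auto
        also have "\<dots> = real n / 4" using p by simp
        finally have "real (2 * (nat \<lfloor>p * real s\<rfloor> + 1)) \<le> real n" using n4 by simp
        thus "2 * (nat \<lfloor>p * real s\<rfloor> + 1) \<le> n" by (simp only: of_nat_le_iff)
      qed
      define N where "N = nat \<lfloor>\<delta> * real n\<rfloor>"
      have N: "real N \<le> \<delta> * real n" using \<delta>0 by (simp add: N_def of_int_floor_le)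
      have "\<delta> * real n \<le> 1 * real n" by (rule mult_right_mono) (use \<delta>1 in auto)
      hence "real N \<le> real n" using N by linarith
      hence Nn: "N \<le> n" by simp
      let ?B = "{Ms. \<exists>V. V \<subseteq> Vs \<times> {1..n} \<and> real (card V) \<le> \<delta> * real n \<and>
        \<not> (\<Sum>ij\<in>{..<length es} \<times> {..<K}. real (card (induced_edges (Ms ij) V))) \<le> p * real (card V)}"
      let ?G = "{Ms. \<forall>V. V \<subseteq> Vs \<times> {1..n} \<and> real (card V) \<le> \<delta> * real n \<longrightarrow>
                (\<Sum>ij\<in>{..<length es} \<times> {..<K}. real (card (induced_edges (Ms ij) V)))
                  \<le> p * real (card V)}"
      let ?P = "sample_matchings es K n m"
      have "measure_pmf.prob ?P ?B \<le> (\<Sum>s\<in>{1..N}. real (card Vs * n choose s) *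
        real ((length es * K * s ^ k) choose (nat \<lfloor>p * real s\<rfloor> + 1)) *
        (2 / real n) ^ ((k - 1) * (nat \<lfloor>p * real s\<rfloor> + 1)))"
        unfolding N_def by (rule union_bound[OF es k1 fV mn n0 p small])
      also have "\<dots> \<le> (\<Sum>s\<in>{1..N}. A * (D * (real s / real n) powr \<gamma>) ^ s)"
      proof (rule sum_mono)
        fix s assume s: "s \<in> {1..N}"
        show "real (card Vs * n choose s) *
          real ((length es * K * s ^ k) choose (nat \<lfloor>p * real s\<rfloor> + 1)) *
          (2 / real n) ^ ((k - 1) * (nat \<lfloor>p * real s\<rfloor> + 1)) \<le> A * (D * (real s / real n) powr \<gamma>) ^ s"
          using term_bound[OF k p \<gamma>_def A_def D2 n0, of s] s Nn unfolding C0_def LK_def by auto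
      qed
      also have "\<dots> = A * (\<Sum>s\<in>{1..N}. (D * (real s / real n) powr \<gamma>) ^ s)"
        by (simp add: sum_distrib_left)
      also have "\<dots> \<le> g n" unfolding g_def using A1
        by (intro mult_left_mono sum_bound[OF D1 \<gamma>0 \<delta>0 _ D\<delta> n0 N]) (use \<delta>1 in auto)
      also have "\<dots> \<le> \<epsilon>" using n1 nn1 by (simp add: less_imp_le)
      finally have PB: "measure_pmf.prob ?P ?B \<le> \<epsilon>" .
      have GB: "?G = space (measure_pmf ?P) - ?B" by auto
      have "measure_pmf.prob ?P ?G = 1 - measure_pmf.prob ?P ?B"
        unfolding GB by (rule measure_pmf.prob_compl) simp
      thus "measure_pmf.prob (sample_matchings es K n (nat \<lfloor>\<alpha> * real n\<rfloor>)) ?G \<ge> 1 - \<epsilon>"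
        using PB m_def by simp
    qed
  qed
qed

end
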